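(* Let $S$ be a finite set of discrete probability distributions. For $x\in(0,1]$ define $C_S(x)$ to be the smallest $y\in[0,1]$ with $\textsc{Rem-Mass}^{\textsc{advanced}}_S(y)\ge x$. Then $C_S$ is non-decreasing, and whenever, during the run of the greedy coupling algorithm on $S$, there is $x$ mass left to be coupled, the next state created by the greedy algorithm has mass at least $C_S(x)$.
   Context: Distributions are finite vectors $p(1)\ge\dots\ge p(n)\ge0$ summing to $1$. Greedy coupling algorithm: maintain the remaining masses of the states of each distribution in $S$. Repeatedly: let $r=\min_{p\in S}\max_j p(j)$; if $r=0$ stop; otherwise create a coupling state of mass $r$ and subtract $r$ from the largest remaining state of every distribution (ties broken arbitrarily). For $y\in[0,1]$, $$\textsc{Rem-Mass}^{\textsc{advanced}}_S(y)=\max_{p\in S}\sum_{j=1}^n\begin{cases}y & y\le p(j)/2,\\ p(j)/2 & p(j)/2<y<p(j),\\ p(j) & p(j)\le y.\end{cases}$$ *)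

theory Defs
  imports Main "HOL.Real"
begin

text \<open>A distribution p(1) \<ge> ... \<ge> p(n) \<ge> 0 summing to 1, as a list (p ! (j-1) = p(j)).\<close>
definition is_dist :: "real list \<Rightarrow> bool" where
  "is_dist p \<longleftrightarrow> sorted_wrt (\<ge>) p \<and> (\<forall>a\<in>set p. 0 \<le> a) \<and> sum_list p = 1"

definition rem_term :: "real \<Rightarrow> real \<Rightarrow> real" where
  "rem_term y a = (if y \<le> a / 2 then y else if y < a then a / 2 else a)"

definition rem_mass_adv :: "real list set \<Rightarrow> real \<Rightarrow> real" where
  "rem_mass_adv S y = Max ((\<lambda>p. \<Sum>j<length p. rem_term y (p ! j)) ` S)"

definition C_S :: "real list set \<Rightarrow> real \<Rightarrow> real" where
  "C_S S x = (LEAST y. y \<in> {0..1} \<and> rem_mass_adv S y \<ge> x)"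

text \<open>Greedy coupling algorithm. A state is (rem, c): rem p j is the remaining mass of
  state j (0-based) of distribution p, c is the total mass coupled so far.\<close>
type_synonym gstate = "(real list \<Rightarrow> nat \<Rightarrow> real) \<times> real"

definition init_state :: "gstate" where
  "init_state = ((\<lambda>p j. p ! j), 0)"

definition next_mass :: "real list set \<Rightarrow> (real list \<Rightarrow> nat \<Rightarrow> real) \<Rightarrow> real" where
  "next_mass S rem = Min ((\<lambda>p. Max ((\<lambda>j. rem p j) ` {..<length p})) ` S)"

definition greedy_step :: "real list set \<Rightarrow> gstate \<Rightarrow> gstate \<Rightarrow> bool" where
  "greedy_step S st st' \<longleftrightarrow>
     (let rem = fst st; c = snd st; r = next_mass S rem in
       r \<noteq> 0 \<and>
       (\<exists>J. (\<forall>p\<in>S. J p < length p \<and> (\<forall>j<length p. rem p j \<le> rem p (J p))) \<and>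
            st' = ((\<lambda>p. if p \<in> S then (rem p)(J p := rem p (J p) - r) else rem p), c + r)))"

definition greedy_reachable :: "real list set \<Rightarrow> gstate \<Rightarrow> bool" where
  "greedy_reachable S st \<longleftrightarrow> (greedy_step S)\<^sup>*\<^sup>* init_state st"

end

theory Submission
  imports Defs
begin

definition fp :: "real list \<Rightarrow> real \<Rightarrow> real" where
  "fp p y = (\<Sum>j<length p. rem_term y (p!j))"

lemma rm_eq: "rem_mass_adv S y = Max ((\<lambda>p. fp p y) ` S)"
  unfolding rem_mass_adv_def fp_def by simp

lemma rt_mono: "y \<le> y' \<Longrightarrow> 0 \<le> a \<Longrightarrow> rem_term y a \<le> rem_term y' a"
  unfolding rem_term_def by auto

lemma rt_cont: "y0 \<le> y \<Longrightarrow> 0 \<le> a \<Longrightarrow> \<not>(y0 < a \<and> a \<le> y) \<Longrightarrow> rem_term y a \<le> rem_term y0 a + (y - y0)"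
  unfolding rem_term_def by auto

lemma dist_elem: assumes "is_dist p" "j < length p" shows "0 \<le> p!j" "p!j \<le> 1"
proof -
  have m: "p!j \<in> set p" using assms(2) by simp
  show "0 \<le> p!j" using assms(1) m unfolding is_dist_def by auto
  show "p!j \<le> 1" using assms(1) m member_le_sum_list[of "p!j" p] unfolding is_dist_def by auto
qed

lemma dist_sum: "is_dist p \<Longrightarrow> (\<Sum>j<length p. p!j) = 1"
  unfolding is_dist_def by (simp add: sum_list_sum_nth atLeast0LessThan)

lemma dist_len: "is_dist p \<Longrightarrow> length p > 0"
  unfolding is_dist_def by (cases p) auto

lemma fp_mono: "is_dist p \<Longrightarrow> y \<le> y' \<Longrightarrow> fp p y \<le> fp p y'"
  unfolding fp_def by (intro sum_mono rt_mono) (auto dest: dist_elem)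

lemma fp_one: "is_dist p \<Longrightarrow> fp p 1 = 1"
proof -
  assume d: "is_dist p"
  have "fp p 1 = (\<Sum>j<length p. p!j)" unfolding fp_def
    by (intro sum.cong refl) (use dist_elem[OF d] in \<open>fastforce simp: rem_term_def\<close>)
  then show ?thesis using dist_sum[OF d] by simp
qed

lemma fp_cont: assumes "is_dist p" "y0 \<le> y" "\<forall>j<length p. \<not>(y0 < p!j \<and> p!j \<le> y)"
  shows "fp p y \<le> fp p y0 + real (length p) * (y - y0)"
proof -
  have "fp p y \<le> (\<Sum>j<length p. rem_term y0 (p!j) + (y - y0))" unfolding fp_def
    by (intro sum_mono rt_cont) (use assms dist_elem[OF assms(1)] in auto)
  also have "\<dots> = fp p y0 + real (length p) * (y - y0)"
    by (simp add: sum.distrib fp_def)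
  finally show ?thesis .
qed

locale distset =
  fixes S :: "real list set"
  assumes fin: "finite S" and ne: "S \<noteq> {}" and dist: "\<forall>p\<in>S. is_dist p"
begin

lemma rm_ge: "p \<in> S \<Longrightarrow> fp p y \<le> rem_mass_adv S y"
  unfolding rm_eq using fin by (intro Max_ge) auto

lemma rm_in: "\<exists>p\<in>S. rem_mass_adv S y = fp p y"
proof -
  have "Max ((\<lambda>p. fp p y) ` S) \<in> (\<lambda>p. fp p y) ` S" using fin ne by (intro Max_in) auto
  then show ?thesis unfolding rm_eq by auto
qed

lemma rm_mono: "y \<le> y' \<Longrightarrow> rem_mass_adv S y \<le> rem_mass_adv S y'"
  using rm_in[of y] rm_ge fp_mono dist by (metis order_trans)

lemma rm_one: "1 \<le> rem_mass_adv S 1"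
proof -
  obtain p where "p \<in> S" using ne by auto
  then show ?thesis using rm_ge[of p 1] fp_one dist by auto
qed

lemma exists_min:
  assumes "x \<le> 1"
  shows "\<exists>y0. y0 \<in> {0..1} \<and> x \<le> rem_mass_adv S y0 \<and> (\<forall>y. y \<in> {0..1} \<and> x \<le> rem_mass_adv S y \<longrightarrow> y0 \<le> y)"
proof -
  define T where "T = {y. y \<in> {0..1} \<and> x \<le> rem_mass_adv S y}"
  have oneT: "1 \<in> T" unfolding T_def using rm_one assms by auto
  have bdd: "bdd_below T" unfolding T_def by (rule bdd_belowI[of _ 0]) auto
  define y0 where "y0 = Inf T"
  have low: "\<And>y. y \<in> T \<Longrightarrow> y0 \<le> y" unfolding y0_def using bdd by (simp add: cInf_lower)
  have y0ge: "0 \<le> y0" unfolding y0_def using oneT by (intro cInf_greatest) (auto simp: T_def)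
  have y0le: "y0 \<le> 1" using low oneT by auto
  have "x \<le> rem_mass_adv S y0"
  proof (rule ccontr)
    assume "\<not> x \<le> rem_mass_adv S y0"
    define d where "d = x - rem_mass_adv S y0"
    have dpos: "d > 0" using \<open>\<not> x \<le> rem_mass_adv S y0\<close> d_def by simp
    define A where "A = {a. \<exists>p\<in>S. a \<in> set p \<and> y0 < a}"
    have finA: "finite A"
      by (rule finite_subset[of _ "\<Union>p\<in>S. set p"]) (use fin in \<open>auto simp: A_def\<close>)
    define \<delta> where "\<delta> = (if A = {} then 1 else Min A - y0)"
    have dlpos: "\<delta> > 0"
    proof (cases "A = {}")
      case False
      then have "Min A \<in> A" using finA by simp
      then show ?thesis using False unfolding \<delta>_def A_def by auto
    qed (simp add: \<delta>_def)
    have dlA: "\<And>a. a \<in> A \<Longrightarrow> y0 + \<delta> \<le> a"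
    proof -
      fix a assume "a \<in> A"
      then have "A \<noteq> {}" "Min A \<le> a" using finA by auto
      then show "y0 + \<delta> \<le> a" unfolding \<delta>_def by simp
    qed
    define N where "N = Max (length ` S)"
    have Nge: "\<And>p. p \<in> S \<Longrightarrow> length p \<le> N" unfolding N_def using fin by simp
    define \<epsilon> where "\<epsilon> = min \<delta> (d / (real N + 1))"
    have epos: "\<epsilon> > 0" unfolding \<epsilon>_def using dlpos dpos by simp
    have "Inf T < y0 + \<epsilon>" using epos y0_def by simp
    then obtain y where yT: "y \<in> T" and yl: "y < y0 + \<epsilon>"
      using cInf_less_iff[OF _ bdd] oneT by blast
    have yge: "y0 \<le> y" using low yT .
    have Ne: "real N * (y - y0) < d"
    proof -
      have "real N * (y - y0) \<le> real N * \<epsilon>" using yl by (intro mult_left_mono) auto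
      also have "\<dots> \<le> real N * (d / (real N + 1))" unfolding \<epsilon>_def by (intro mult_left_mono) auto
      also have "\<dots> < d" using dpos by (simp add: field_simps)
      finally show ?thesis .
    qed
    have "\<And>p. p \<in> S \<Longrightarrow> fp p y < x"
    proof -
      fix p assume pS: "p \<in> S"
      have nb: "\<forall>j<length p. \<not>(y0 < p!j \<and> p!j \<le> y)"
      proof (intro allI impI notI)
        fix j assume "j < length p" "y0 < p!j \<and> p!j \<le> y"
        then have "p!j \<in> A" unfolding A_def using pS nth_mem by blast
        then have "y0 + \<delta> \<le> p!j" by (rule dlA)
        moreover have "\<epsilon> \<le> \<delta>" unfolding \<epsilon>_def by simp
        ultimately show False using yl \<open>y0 < p!j \<and> p!j \<le> y\<close> by simp
      qed
      have "fp p y \<le> fp p y0 + real (length p) * (y - y0)"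
        using fp_cont dist pS yge nb by blast
      also have "\<dots> \<le> rem_mass_adv S y0 + real N * (y - y0)"
        using rm_ge[OF pS, of y0] Nge[OF pS] yge by (intro add_mono mult_right_mono) auto
      also have "\<dots> < x" using Ne d_def by simp
      finally show "fp p y < x" .
    qed
    then have "rem_mass_adv S y < x" using rm_in[of y] by auto
    then show False using yT unfolding T_def by auto
  qed
  then show ?thesis using y0ge y0le low unfolding T_def by auto
qed

lemma C_char:
  assumes "x \<le> 1"
  shows "C_S S x \<in> {0..1}" "x \<le> rem_mass_adv S (C_S S x)"
        "\<And>y. y \<in> {0..1} \<Longrightarrow> x \<le> rem_mass_adv S y \<Longrightarrow> C_S S x \<le> y"
proof -
  obtain y0 where y0: "y0 \<in> {0..1}" "x \<le> rem_mass_adv S y0"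
    "\<forall>y. y \<in> {0..1} \<and> x \<le> rem_mass_adv S y \<longrightarrow> y0 \<le> y"
    using exists_min[OF assms] by blast
  have "C_S S x = y0" unfolding C_S_def by (rule Least_equality) (use y0 in auto)
  then show "C_S S x \<in> {0..1}" "x \<le> rem_mass_adv S (C_S S x)"
        "\<And>y. y \<in> {0..1} \<Longrightarrow> x \<le> rem_mass_adv S y \<Longrightarrow> C_S S x \<le> y" using y0 by auto
qed

lemma C_mono: "mono_on {0<..1} (C_S S)"
proof (rule mono_onI)
  fix r s :: real assume "r \<in> {0<..1}" "s \<in> {0<..1}" "r \<le> s"
  then show "C_S S r \<le> C_S S s"
    using C_char[of s] C_char(3)[of r "C_S S s"] by auto
qed

end

definition mx :: "(real list \<Rightarrow> nat \<Rightarrow> real) \<Rightarrow> real list \<Rightarrow> real" where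
  "mx rem p = Max (rem p ` {..<length p})"

lemma elem_le_mx: "j < length p \<Longrightarrow> rem p j \<le> mx rem p"
  unfolding mx_def by (intro Max_ge) auto

lemma mx_in: "length p > 0 \<Longrightarrow> \<exists>j<length p. mx rem p = rem p j"
proof -
  assume "length p > 0"
  then have "mx rem p \<in> rem p ` {..<length p}" unfolding mx_def by (intro Max_in) auto
  then show ?thesis by auto
qed

lemma mx_le: "length p > 0 \<Longrightarrow> (\<And>j. j < length p \<Longrightarrow> rem p j \<le> b) \<Longrightarrow> mx rem p \<le> b"
proof -
  assume "length p > 0" "\<And>j. j < length p \<Longrightarrow> rem p j \<le> b"
  then show ?thesis using mx_in[of p rem] by auto
qed

lemma sum_upd: "(k::nat) < n \<Longrightarrow> (\<Sum>j<n. (f(k := v)) j) = (\<Sum>j<n. f j) - f k + (v::real)"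
proof -
  assume k: "k < n"
  have "(\<Sum>j<n. (f(k := v)) j) = (f(k:=v)) k + (\<Sum>j\<in>{..<n}-{k}. (f(k := v)) j)"
    using k by (subst sum.remove[of _ k]) auto
  also have "(\<Sum>j\<in>{..<n}-{k}. (f(k := v)) j) = (\<Sum>j\<in>{..<n}-{k}. f j)"
    by (intro sum.cong) auto
  also have "(\<Sum>j<n. f j) = f k + (\<Sum>j\<in>{..<n}-{k}. f j)"
    using k by (subst sum.remove[of _ k]) auto
  ultimately show ?thesis by simp
qed

context distset
begin

lemma nm_eq: "next_mass S rem = Min ((mx rem) ` S)"
  unfolding next_mass_def mx_def by simp

lemma nm_le: "p \<in> S \<Longrightarrow> next_mass S rem \<le> mx rem p"
  unfolding nm_eq using fin by (intro Min_le) auto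

lemma nm_in: "\<exists>p\<in>S. next_mass S rem = mx rem p"
proof -
  have "Min ((mx rem) ` S) \<in> (mx rem) ` S" using fin ne by (intro Min_in) auto
  then show ?thesis unfolding nm_eq by auto
qed

lemma lenpos: "p \<in> S \<Longrightarrow> length p > 0"
  using dist dist_len by blast

lemma nm_nonneg: "(\<forall>p\<in>S. \<forall>j<length p. 0 \<le> rem p j) \<Longrightarrow> 0 \<le> next_mass S rem"
proof -
  assume a: "\<forall>p\<in>S. \<forall>j<length p. 0 \<le> rem p j"
  obtain p where p: "p \<in> S" "next_mass S rem = mx rem p" using nm_in by blast
  have "rem p 0 \<le> mx rem p" using lenpos[OF p(1)] by (intro elem_le_mx)
  then show ?thesis using a p lenpos[OF p(1)] by fastforce
qed

lemma nm_mono: "(\<forall>p\<in>S. \<forall>j<length p. rem' p j \<le> rem p j) \<Longrightarrow> next_mass S rem' \<le> next_mass S rem"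
proof -
  assume a: "\<forall>p\<in>S. \<forall>j<length p. rem' p j \<le> rem p j"
  obtain p where p: "p \<in> S" "next_mass S rem = mx rem p" using nm_in by blast
  obtain j where j: "j < length p" "mx rem' p = rem' p j" using mx_in lenpos[OF p(1)] by blast
  have "next_mass S rem' \<le> mx rem' p" using nm_le p by blast
  also have "\<dots> \<le> rem p j" using j a p by auto
  also have "\<dots> \<le> mx rem p" using j(1) by (rule elem_le_mx)
  finally show ?thesis using p by simp
qed

definition ginv :: "gstate \<Rightarrow> bool" where
  "ginv st \<longleftrightarrow> (\<forall>p\<in>S. (\<forall>j<length p. 0 \<le> fst st p j \<and> fst st p j \<le> p!j \<and>
     (fst st p j = p!j \<or> fst st p j + next_mass S (fst st) \<le> p!j)) \<and>
     (\<Sum>j<length p. fst st p j) = 1 - snd st)"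

lemma ginv_init: "ginv init_state"
  unfolding ginv_def init_state_def using dist dist_elem dist_sum by auto

lemma ginv_step:
  assumes st: "greedy_step S st st'" and inv: "ginv st"
  shows "ginv st'"
proof -
  obtain rem c where stt: "st = (rem, c)" by (cases st)
  define r where "r = next_mass S rem"
  have "\<exists>J. (\<forall>p\<in>S. J p < length p \<and> (\<forall>j<length p. rem p j \<le> rem p (J p))) \<and>
     st' = ((\<lambda>p. if p \<in> S then (rem p)(J p := rem p (J p) - r) else rem p), c + r)"
    using st unfolding greedy_step_def stt r_def Let_def fst_conv snd_conv by blast
  then obtain J where J: "\<forall>p\<in>S. J p < length p \<and> (\<forall>j<length p. rem p j \<le> rem p (J p))"
    and st': "st' = ((\<lambda>p. if p \<in> S then (rem p)(J p := rem p (J p) - r) else rem p), c + r)"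
    by blast
  define rem' where "rem' = (\<lambda>p. if p \<in> S then (rem p)(J p := rem p (J p) - r) else rem p)"
  have I: "\<forall>p\<in>S. (\<forall>j<length p. 0 \<le> rem p j \<and> rem p j \<le> p!j \<and>
     (rem p j = p!j \<or> rem p j + r \<le> p!j)) \<and> (\<Sum>j<length p. rem p j) = 1 - c"
    using inv unfolding ginv_def stt r_def by simp
  have r0: "0 \<le> r" unfolding r_def using I by (intro nm_nonneg) auto
  have rJ: "\<And>p. p \<in> S \<Longrightarrow> r \<le> rem p (J p)"
  proof -
    fix p assume p: "p \<in> S"
    have "r \<le> mx rem p" unfolding r_def using nm_le p by blast
    also have "\<dots> \<le> rem p (J p)" using J p lenpos[OF p] by (intro mx_le) auto
    finally show "r \<le> rem p (J p)" .
  qed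
  have le: "\<forall>p\<in>S. \<forall>j<length p. rem' p j \<le> rem p j" unfolding rem'_def using r0 by auto
  have r'le: "next_mass S rem' \<le> r" unfolding r_def using le by (rule nm_mono)
  have "\<forall>p\<in>S. (\<forall>j<length p. 0 \<le> rem' p j \<and> rem' p j \<le> p!j \<and>
     (rem' p j = p!j \<or> rem' p j + next_mass S rem' \<le> p!j)) \<and> (\<Sum>j<length p. rem' p j) = 1 - (c + r)"
  proof (intro ballI conjI allI impI)
    fix p j assume p: "p \<in> S" and j: "j < length p"
    have Ij: "0 \<le> rem p j" "rem p j \<le> p!j" "rem p j = p!j \<or> rem p j + r \<le> p!j" using I p j by auto
    show "0 \<le> rem' p j" using Ij rJ[OF p] p unfolding rem'_def by auto
    show "rem' p j \<le> p!j" using Ij r0 p unfolding rem'_def by auto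
    show "rem' p j = p!j \<or> rem' p j + next_mass S rem' \<le> p!j"
      using Ij r0 r'le p unfolding rem'_def by auto
  next
    fix p assume p: "p \<in> S"
    have "(\<Sum>j<length p. rem' p j) = (\<Sum>j<length p. rem p j) - rem p (J p) + (rem p (J p) - r)"
    proof -
      have "(\<Sum>j<length p. rem' p j) = (\<Sum>j<length p. ((rem p)(J p := rem p (J p) - r)) j)"
        unfolding rem'_def using p by simp
      also have "\<dots> = (\<Sum>j<length p. rem p j) - rem p (J p) + (rem p (J p) - r)"
        by (rule sum_upd) (use J p in auto)
      finally show ?thesis .
    qed
    then show "(\<Sum>j<length p. rem' p j) = 1 - (c + r)" using I p by simp
  qed
  then show ?thesis unfolding ginv_def st' rem'_def[symmetric] by simp
qed

lemma ginv_reach: "greedy_reachable S st \<Longrightarrow> ginv st"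
  unfolding greedy_reachable_def
proof (induction rule: rtranclp_induct)
  case base then show ?case by (rule ginv_init)
next
  case (step y z) then show ?case using ginv_step by blast
qed

lemma main2:
  assumes reach: "greedy_reachable S (rem, c)" and x: "x = 1 - c" "0 < x"
  shows "C_S S x \<le> next_mass S rem"
proof -
  define r where "r = next_mass S rem"
  have I: "\<forall>p\<in>S. (\<forall>j<length p. 0 \<le> rem p j \<and> rem p j \<le> p!j \<and>
     (rem p j = p!j \<or> rem p j + r \<le> p!j)) \<and> (\<Sum>j<length p. rem p j) = 1 - c"
    using ginv_reach[OF reach] unfolding ginv_def r_def by simp
  obtain p where p: "p \<in> S" "r = mx rem p" using nm_in r_def by blast
  have d: "is_dist p" using dist p by auto
  have le_r: "\<And>j. j < length p \<Longrightarrow> rem p j \<le> r" using p elem_le_mx by simp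
  have r0: "0 \<le> r" unfolding r_def using I by (intro nm_nonneg) auto
  obtain j0 where j0: "j0 < length p" "mx rem p = rem p j0" using mx_in lenpos[OF p(1)] by blast
  have r1: "r \<le> 1" using p j0 I dist_elem[OF d j0(1)] by fastforce
  have "x = (\<Sum>j<length p. rem p j)" using I p x by simp
  also have "\<dots> \<le> fp p r" unfolding fp_def
  proof (intro sum_mono)
    fix j assume "j \<in> {..<length p}"
    then have j: "j < length p" by simp
    have Ij: "0 \<le> rem p j" "rem p j \<le> p!j" "rem p j = p!j \<or> rem p j + r \<le> p!j" using I p j by auto
    show "rem p j \<le> rem_term r (p!j)" using Ij le_r[OF j] unfolding rem_term_def by auto
  qed
  also have "\<dots> \<le> rem_mass_adv S r" using rm_ge p by blast
  finally have xr: "x \<le> rem_mass_adv S r" .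
  have "x \<le> 1"
  proof -
    have "x = (\<Sum>j<length p. rem p j)" using I p x by simp
    also have "\<dots> \<le> (\<Sum>j<length p. p!j)" using I p by (intro sum_mono) auto
    finally show ?thesis using dist_sum[OF d] by simp
  qed
  then show ?thesis using C_char(3)[of x r] r0 r1 xr r_def by auto
qed

end

theorem lemma6:
  fixes S :: "real list set"
  assumes "finite S" and "S \<noteq> {}" and "\<forall>p\<in>S. is_dist p"
  shows "mono_on {0<..1} (C_S S) \<and>
         (\<forall>rem c x. greedy_reachable S (rem, c) \<longrightarrow> x = 1 - c \<longrightarrow> 0 < x \<longrightarrow>
              next_mass S rem \<ge> C_S S x)"
proof -
  interpret distset S using assms by unfold_locales
  show ?thesis using C_mono main2 by blast
qed

end
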